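(* Let $(\mathcal U,\mathcal F)$ be a strongly accessible set system satisfying the commutable property, let $P$ be a maximal solution and $w\in\mathcal U$. Let $S$ be a maximal solution that is not a root and satisfies $\mathrm{parent}'(S)=P$ and $\mathrm{pi}'(S)=w$. Then $w\notin P$, and there exist $R\in\mathrm{restr}(P,w)$ and $s\in R\cap Z$ with $s\neq w$ such that $$S=\mathrm{complete}'\big(\mathrm{complete}'(\{s\},R)|_w\cup\{w\},\ \mathcal U\big).$$
   Context: A set system is $(\mathcal U,\mathcal F)$ with $\mathcal U$ finite, $\mathcal F\subseteq 2^{\mathcal U}$, $\emptyset\in\mathcal F$; $S\in\mathcal F$ is maximal if no $Y\in\mathcal F$ has $S\subsetneq Y$. Strongly accessible: for all $X,Y\in\mathcal F$ with $X\subsetneq Y$ there is $z\in Y\setminus X$ with $X\cup\{z\}\in\mathcal F$. Commutable: for all $X,Y\in\mathcal F$ with $X\ne\emptyset$, $X\subsetneq Y$, $a,b\in Y\setminus X$, if $X\cup\{a\},X\cup\{b\}\in\mathcal F$ then $X\cup\{a,b\}\in\mathcal F$. Elements of $\mathcal U$ are distinct integers. $X^+_A=\{a\in A\setminus X: X\cup\{a\}\in\mathcal F\}$, $X^+=X^+_{\mathcal U}$. $Z=\{x:\{x\}\in\mathcal F\}$, $\mathrm{source}(X)=\min(X\cap Z)$. Layers: for $X\in\mathcal F$, $t\in X\cap Z$: $B_0=\{t\}$, $B_i=B_{i-1}\cup(B_{i-1}^+\cap X)$; for $y\in X\cup X^+$, $\mathrm{lay}^X_t(t)=0$ and for $y\ne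 t$, $\mathrm{lay}^X_t(y)=\min\{i\ge1:y\in B_{i-1}^+\}$; $\mathrm{lay}^X=\mathrm{lay}^X_{\mathrm{source}(X)}$. $\mathrm{choose}'(X,A)$ is the $y\in X^+_A$ minimizing $(\mathrm{lay}^X(y),y)$ lexicographically. $\mathrm{complete}'(X,A)$: while $X^+_A\neq\emptyset$, add $\mathrm{choose}'(X,A)$ to $X$; return $X$. The truncated version $\mathrm{complete}'(X,A)|_w$ runs the same loop but stops as soon as $\mathrm{choose}'(X,A)$ would return $w$, returning the current $X$ (so $w$ is not added). The layered canonical order of a nonempty maximal $S$: $s_1=\mathrm{source}(S)$, $s_{i+1}=\mathrm{choose}'(S[i],S)$ while $S[i]^+_S\ne\emptyset$, with $S[i]=\{s_1,\dots,s_i\}$. Let $j$ be the smallest index with $\mathrm{complete}'(S[j],\mathcal U)=S$; $S$ is a root if $j=1$; otherwise $\mathrm{pi}'(S)=s_j$, $\mathrm{core}'(S)=S[j-1]$ and $\mathrm{parent}'(S)=\mathrm{complete}'(\mathrm{core}'(S),\mathcal U)$. For a maximal solution $P$ and $w\in\mathcal U$, $\mathrm{restr}(P,w)$ is the set of all $R\in\mathcal F$ with $R\subseteq P\cup\{w\}$, $R\neq P$, that are maximal among members of $\mathcal F$ contained in $P\cup\{w\}$. *)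

theory Defs
  imports Main
begin

definition set_system :: "int set \<Rightarrow> int set set \<Rightarrow> bool" where
  "set_system U F \<longleftrightarrow> finite U \<and> F \<subseteq> Pow U \<and> {} \<in> F"

definition maximal :: "int set set \<Rightarrow> int set \<Rightarrow> bool" where
  "maximal F S \<longleftrightarrow> S \<in> F \<and> \<not> (\<exists>Y\<in>F. S \<subset> Y)"

definition strongly_accessible :: "int set set \<Rightarrow> bool" where
  "strongly_accessible F \<longleftrightarrow>
     (\<forall>X\<in>F. \<forall>Y\<in>F. X \<subset> Y \<longrightarrow> (\<exists>z\<in>Y - X. insert z X \<in> F))"

definition commutable :: "int set set \<Rightarrow> bool" where
  "commutable F \<longleftrightarrow>
     (\<forall>X\<in>F. \<forall>Y\<in>F. \<forall>a b. X \<noteq> {} \<and> X \<subset> Y \<and> a \<in> Y - X \<and> b \<in> Y - X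
        \<and> insert a X \<in> F \<and> insert b X \<in> F \<longrightarrow> insert a (insert b X) \<in> F)"

definition ext :: "int set set \<Rightarrow> int set \<Rightarrow> int set \<Rightarrow> int set" where
  "ext F A X = {a \<in> A - X. insert a X \<in> F}"

definition Zset :: "int set set \<Rightarrow> int set" where
  "Zset F = {x. {x} \<in> F}"

definition source :: "int set set \<Rightarrow> int set \<Rightarrow> int" where
  "source F X = Min (X \<inter> Zset F)"

fun layerB :: "int set \<Rightarrow> int set set \<Rightarrow> int set \<Rightarrow> int \<Rightarrow> nat \<Rightarrow> int set" where
  "layerB U F X t 0 = {t}"
| "layerB U F X t (Suc i) = layerB U F X t i \<union> (ext F U (layerB U F X t i) \<inter> X)"

definition lay_t :: "int set \<Rightarrow> int set set \<Rightarrow> int set \<Rightarrow> int \<Rightarrow> int \<Rightarrow> nat" where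
  "lay_t U F X t y = (if y = t then 0
      else (LEAST i. 1 \<le> i \<and> y \<in> ext F U (layerB U F X t (i - 1))))"

definition lay :: "int set \<Rightarrow> int set set \<Rightarrow> int set \<Rightarrow> int \<Rightarrow> nat" where
  "lay U F X y = lay_t U F X (source F X) y"

definition choose' :: "int set \<Rightarrow> int set set \<Rightarrow> int set \<Rightarrow> int set \<Rightarrow> int" where
  "choose' U F X A = (SOME y. y \<in> ext F A X \<and>
      (\<forall>z\<in>ext F A X. lay U F X y < lay U F X z \<or> (lay U F X y = lay U F X z \<and> y \<le> z)))"

(* the loop of complete', with fuel; each iteration adds a new element of U,
   so card U iterations always suffice to reach termination *)
fun compl_it :: "int set \<Rightarrow> int set set \<Rightarrow> int set \<Rightarrow> nat \<Rightarrow> int set \<Rightarrow> int set" where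
  "compl_it U F A 0 X = X"
| "compl_it U F A (Suc n) X =
     (if ext F A X = {} then X else compl_it U F A n (insert (choose' U F X A) X))"

definition complete' :: "int set \<Rightarrow> int set set \<Rightarrow> int set \<Rightarrow> int set \<Rightarrow> int set" where
  "complete' U F X A = compl_it U F A (card U) X"

fun compl_tr_it :: "int set \<Rightarrow> int set set \<Rightarrow> int set \<Rightarrow> int \<Rightarrow> nat \<Rightarrow> int set \<Rightarrow> int set" where
  "compl_tr_it U F A w 0 X = X"
| "compl_tr_it U F A w (Suc n) X =
     (if ext F A X = {} then X
      else if choose' U F X A = w then X
      else compl_tr_it U F A w n (insert (choose' U F X A) X))"

definition complete_trunc :: "int set \<Rightarrow> int set set \<Rightarrow> int set \<Rightarrow> int set \<Rightarrow> int \<Rightarrow> int set" where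
  "complete_trunc U F X A w = compl_tr_it U F A w (card U) X"

(* prefixes S[i] of the layered canonical order of S (meaningful for 1 <= i <= |S|) *)
fun canon_prefix :: "int set \<Rightarrow> int set set \<Rightarrow> int set \<Rightarrow> nat \<Rightarrow> int set" where
  "canon_prefix U F S 0 = {}"
| "canon_prefix U F S (Suc 0) = {source F S}"
| "canon_prefix U F S (Suc (Suc i)) =
     insert (choose' U F (canon_prefix U F S (Suc i)) S) (canon_prefix U F S (Suc i))"

definition canon_elem :: "int set \<Rightarrow> int set set \<Rightarrow> int set \<Rightarrow> nat \<Rightarrow> int" where
  "canon_elem U F S i = (if i = 1 then source F S else choose' U F (canon_prefix U F S (i - 1)) S)"

definition canon_j :: "int set \<Rightarrow> int set set \<Rightarrow> int set \<Rightarrow> nat" where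
  "canon_j U F S = (LEAST j. 1 \<le> j \<and> j \<le> card S \<and> complete' U F (canon_prefix U F S j) U = S)"

definition is_root :: "int set \<Rightarrow> int set set \<Rightarrow> int set \<Rightarrow> bool" where
  "is_root U F S \<longleftrightarrow> canon_j U F S = 1"

definition pi' :: "int set \<Rightarrow> int set set \<Rightarrow> int set \<Rightarrow> int" where
  "pi' U F S = canon_elem U F S (canon_j U F S)"

definition core' :: "int set \<Rightarrow> int set set \<Rightarrow> int set \<Rightarrow> int set" where
  "core' U F S = canon_prefix U F S (canon_j U F S - 1)"

definition parent' :: "int set \<Rightarrow> int set set \<Rightarrow> int set \<Rightarrow> int set" where
  "parent' U F S = complete' U F (core' U F S) U"

definition restr :: "int set set \<Rightarrow> int set \<Rightarrow> int \<Rightarrow> int set set" where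
  "restr F P w = {R \<in> F. R \<subseteq> insert w P \<and> R \<noteq> P \<and>
      \<not> (\<exists>Y\<in>F. Y \<subseteq> insert w P \<and> R \<subset> Y)}"

end

theory Submission
  imports Defs "HOL-Library.Product_Lexorder"
begin

locale sys =
  fixes U :: "int set" and F :: "int set set"
  assumes finU: "finite U" and FU: "F \<subseteq> Pow U" and emp: "{} \<in> F"
    and sa: "strongly_accessible F" and cm: "commutable F"
begin

lemma ext_iff: "a \<in> ext F A X \<longleftrightarrow> a \<in> A \<and> a \<notin> X \<and> insert a X \<in> F"
  by (auto simp: ext_def)

lemma F_sub: "X \<in> F \<Longrightarrow> X \<subseteq> U" using FU by auto

lemma F_fin: "X \<in> F \<Longrightarrow> finite X" using F_sub finU finite_subset by blast

lemma sa_step: "X \<in> F \<Longrightarrow> Y \<in> F \<Longrightarrow> X \<subset> Y \<Longrightarrow> \<exists>z\<in>Y - X. insert z X \<in> F"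
  using sa unfolding strongly_accessible_def by blast

lemma cm_step: "X \<in> F \<Longrightarrow> Y \<in> F \<Longrightarrow> X \<noteq> {} \<Longrightarrow> X \<subset> Y \<Longrightarrow> a \<in> Y - X \<Longrightarrow> b \<in> Y - X
   \<Longrightarrow> insert a X \<in> F \<Longrightarrow> insert b X \<in> F \<Longrightarrow> insert a (insert b X) \<in> F"
  using cm unfolding commutable_def by blast

lemma grow:
  assumes "Z \<subseteq> Z'" "Z \<in> F" "Z' \<in> F" "Z \<noteq> {}" "insert y Z \<in> F" "y \<notin> Z'"
    "insert y Z' \<subseteq> Y" "Y \<in> F"
  shows "insert y Z' \<in> F"
  using assms
proof (induction "card (Z' - Z)" arbitrary: Z rule: less_induct)
  case less
  show ?case
  proof (cases "Z = Z'")
    case True then show ?thesis using less by simp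
  next
    case False
    then have "Z \<subset> Z'" using less by auto
    then obtain z where z: "z \<in> Z' - Z" "insert z Z \<in> F" using sa_step less(3,4) by blast
    have "insert z (insert y Z) \<in> F"
      apply (rule cm_step[of Z Y])
      using less(2-9) z by auto
    then have I: "insert y (insert z Z) \<in> F" by (simp add: insert_commute)
    have fin: "finite Z'" using F_fin less by auto
    have "card (Z' - insert z Z) < card (Z' - Z)"
      using z fin by (metis Diff_insert card_Diff1_less finite_Diff)
    then show ?thesis
      apply (rule less(1))
      using less(2-9) z I by auto
  qed
qed

abbreviation B where "B X t k \<equiv> layerB U F X t k"
abbreviation L where "L X t y \<equiv> lay_t U F X t y"

lemma ext_fin: "A \<subseteq> U \<Longrightarrow> finite (ext F A X)"
  using finU unfolding ext_def by (auto intro: finite_subset)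

lemma B_props:
  assumes X: "X \<in> F" and t: "t \<in> X" "{t} \<in> F"
  shows "B X t k \<in> F \<and> B X t k \<subseteq> X \<and> t \<in> B X t k"
proof (induction k)
  case 0 then show ?case using t by simp
next
  case (Suc k)
  let ?E = "ext F U (B X t k) \<inter> X"
  have fE: "finite ?E" using ext_fin by blast
  have "\<forall>E. E \<subseteq> ?E \<longrightarrow> B X t k \<union> E \<in> F"
  proof (intro allI impI)
    fix E assume "E \<subseteq> ?E"
    have "finite E" using \<open>E \<subseteq> ?E\<close> fE finite_subset by blast
    then show "B X t k \<union> E \<in> F" using \<open>E \<subseteq> ?E\<close>
    proof (induction E rule: finite_induct)
      case empty then show ?case using Suc by simp
    next
      case (insert a E)
      have a: "a \<in> U" "a \<notin> B X t k" "insert a (B X t k) \<in> F" "a \<in> X"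
        using insert(4) by (auto simp: ext_iff)
      have "insert a (B X t k \<union> E) \<in> F"
        apply (rule grow[of "B X t k" _ _ X])
        using Suc insert a X by auto
      then show ?case by simp
    qed
  qed
  then have "B X t (Suc k) \<in> F" by simp
  then show ?case using Suc by auto
qed

lemma B_mono:
  assumes X: "X \<in> F" "X' \<in> F" "X \<subseteq> X'" and t: "t \<in> X" "{t} \<in> F"
  shows "B X t k \<subseteq> B X' t k"
proof (induction k)
  case 0 then show ?case by simp
next
  case (Suc k)
  have p: "B X t k \<in> F" "B X t k \<subseteq> X" "t \<in> B X t k" using B_props X t by auto
  have p': "B X' t k \<in> F" "B X' t k \<subseteq> X'" "t \<in> B X' t k" using B_props X t by auto
  show ?case
  proof
    fix a assume "a \<in> B X t (Suc k)"
    then consider "a \<in> B X t k" | "a \<in> ext F U (B X t k)" "a \<in> X" by auto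
    then show "a \<in> B X' t (Suc k)"
    proof cases
      case 1 then show ?thesis using Suc by auto
    next
      case 2
      show ?thesis
      proof (cases "a \<in> B X' t k")
        case True then show ?thesis by simp
      next
        case False
        have "insert a (B X' t k) \<in> F"
          apply (rule grow[of "B X t k" _ _ X'])
          using Suc p p' 2 False X by (auto simp: ext_iff)
        then have "a \<in> ext F U (B X' t k)" using False 2 X F_sub by (auto simp: ext_iff)
        then show ?thesis using 2 X by auto
      qed
    qed
  qed
qed

lemma B_full:
  assumes X: "X \<in> F" and t: "t \<in> X" "{t} \<in> F"
  shows "B X t (card X) = X"
proof -
  have fX: "finite X" using F_fin X by auto
  have "\<forall>k. B X t k = X \<or> k + 1 \<le> card (B X t k)"
  proof
    fix k show "B X t k = X \<or> k + 1 \<le> card (B X t k)"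
    proof (induction k)
      case 0 then show ?case by simp
    next
      case (Suc k)
      have p: "B X t k \<in> F" "B X t k \<subseteq> X" using B_props X t by auto
      show ?case
      proof (cases "B X t k = X")
        case True then show ?thesis by auto
      next
        case False
        then have "B X t k \<subset> X" using p by auto
        then obtain z where z: "z \<in> X - B X t k" "insert z (B X t k) \<in> F"
          using sa_step p X by blast
        have "z \<in> ext F U (B X t k)" using z X F_sub by (auto simp: ext_iff)
        then have sub: "insert z (B X t k) \<subseteq> B X t (Suc k)" using z by auto
        have "finite (B X t (Suc k))" using B_props[OF X t, of "Suc k"] fX finite_subset by blast
        then have "card (insert z (B X t k)) \<le> card (B X t (Suc k))" using sub card_mono by blast
        moreover have "card (insert z (B X t k)) = card (B X t k) + 1"
          using z p fX finite_subset by fastforce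
        ultimately show ?thesis using Suc False by auto
      qed
    qed
  qed
  then have "B X t (card X) = X \<or> card X + 1 \<le> card (B X t (card X))" by blast
  moreover have "card (B X t (card X)) \<le> card X"
    using B_props[OF X t] fX card_mono by blast
  ultimately show ?thesis by auto
qed

lemma lay_char:
  assumes X: "X \<in> F" and t: "t \<in> X" "{t} \<in> F" and y: "y \<in> ext F U X"
  shows "1 \<le> L X t y" "y \<in> ext F U (B X t (L X t y - 1))"
    "\<And>i. 1 \<le> i \<Longrightarrow> y \<in> ext F U (B X t (i - 1)) \<Longrightarrow> L X t y \<le> i"
proof -
  have yt: "y \<noteq> t" using y t by (auto simp: ext_iff)
  have ex: "1 \<le> card X + 1 \<and> y \<in> ext F U (B X t (card X + 1 - 1))"
    using B_full[OF X t] y by simp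
  have eq: "L X t y = (LEAST i. 1 \<le> i \<and> y \<in> ext F U (B X t (i - 1)))"
    using yt by (simp add: lay_t_def)
  show "1 \<le> L X t y" "y \<in> ext F U (B X t (L X t y - 1))"
    unfolding eq using LeastI[of "\<lambda>i. 1 \<le> i \<and> y \<in> ext F U (B X t (i - 1))", OF ex] by auto
  show "\<And>i. 1 \<le> i \<Longrightarrow> y \<in> ext F U (B X t (i - 1)) \<Longrightarrow> L X t y \<le> i"
    unfolding eq by (simp add: Least_le)
qed

lemma lay_mono:
  assumes X: "X \<in> F" "X' \<in> F" "X \<subseteq> X'" and t: "t \<in> X" "{t} \<in> F"
    and y: "y \<in> ext F U X" "y \<in> ext F U X'"
  shows "L X' t y \<le> L X t y"
proof -
  let ?l = "L X t y"
  have c: "1 \<le> ?l" "y \<in> ext F U (B X t (?l - 1))" using lay_char[OF X(1) t y(1)] by auto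
  have p: "B X t (?l-1) \<in> F" "B X t (?l-1) \<subseteq> X" "t \<in> B X t (?l-1)" using B_props X t by auto
  have p': "B X' t (?l-1) \<in> F" "B X' t (?l-1) \<subseteq> X'" using B_props X t by auto
  have m: "B X t (?l-1) \<subseteq> B X' t (?l-1)" using B_mono X t by blast
  have "insert y (B X' t (?l-1)) \<in> F"
    apply (rule grow[of "B X t (?l-1)" _ _ "insert y X'"])
    using c p p' m y by (auto simp: ext_iff)
  then have "y \<in> ext F U (B X' t (?l - 1))" using y p' by (auto simp: ext_iff)
  then show ?thesis using lay_char(3)[OF X(2) _ t(2) y(2)] c X t by auto
qed

lemma B_insert_same:
  assumes X: "X \<in> F" and t: "t \<in> X" "{t} \<in> F" and a: "a \<in> ext F U X"
  shows "k < L X t a \<Longrightarrow> B (insert a X) t k = B X t k"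
proof (induction k)
  case 0 then show ?case by simp
next
  case (Suc k)
  have "a \<notin> ext F U (B X t k)"
  proof
    assume "a \<in> ext F U (B X t k)"
    then have "L X t a \<le> Suc k" using lay_char(3)[OF X t a, of "Suc k"] by simp
    then show False using Suc by simp
  qed
  then have "ext F U (B X t k) \<inter> insert a X = ext F U (B X t k) \<inter> X" by auto
  then show ?case using Suc by simp
qed

lemma sorted_step:
  assumes X: "X \<in> F" and t: "t \<in> X" "{t} \<in> F" and a: "a \<in> ext F U X"
    and b: "b \<in> ext F U (insert a X)"
    and h: "b \<in> ext F U X \<Longrightarrow> (L X t a, a) \<le> (L X t b, b)"
  shows "(L X t a, a) \<le> (L (insert a X) t b, b)"
proof -
  let ?X' = "insert a X"
  have X': "?X' \<in> F" using a by (auto simp: ext_iff)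
  let ?p = "L X t a" and ?q = "L ?X' t b"
  show ?thesis
  proof (cases "?p < ?q")
    case True then show ?thesis by (simp add: less_eq_prod_def)
  next
    case False
    have cq: "1 \<le> ?q" "b \<in> ext F U (B ?X' t (?q - 1))" using lay_char[OF X' _ t(2) b] t by auto
    have eqB: "B ?X' t (?q - 1) = B X t (?q - 1)"
      using B_insert_same[OF X t a] False cq by simp
    have p: "B X t (?q-1) \<in> F" "B X t (?q-1) \<subseteq> X" "t \<in> B X t (?q-1)" using B_props X t by auto
    have "insert b X \<in> F"
      apply (rule grow[of "B X t (?q-1)" _ _ "insert b ?X'"])
      using cq eqB p b X by (auto simp: ext_iff)
    then have bX: "b \<in> ext F U X" using b by (auto simp: ext_iff)
    let ?r = "L X t b"
    have cr: "1 \<le> ?r" "b \<in> ext F U (B X t (?r - 1))" using lay_char[OF X t bX] by auto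
    have "?r \<le> ?q" using lay_char(3)[OF X t bX] cq eqB by auto
    moreover have "?q \<le> ?r"
    proof -
      have "B ?X' t (?r - 1) = B X t (?r - 1)"
        using B_insert_same[OF X t a] False cr \<open>?r \<le> ?q\<close> by simp
      then show ?thesis using lay_char(3)[OF X' _ t(2) b] t cr by auto
    qed
    ultimately have "?r = ?q" by simp
    then show ?thesis using h[OF bX] by simp
  qed
qed

definition key where "key X y = (lay U F X y, y)"

lemma choose_prop:
  assumes "A \<subseteq> U" "ext F A X \<noteq> {}"
  shows "choose' U F X A \<in> ext F A X \<and> (\<forall>z\<in>ext F A X. key X (choose' U F X A) \<le> key X z)"
proof -
  let ?E = "ext F A X"
  have fE: "finite ?E" using ext_fin assms by blast
  let ?m = "Min (key X ` ?E)"
  have "?m \<in> key X ` ?E" using fE assms by (intro Min_in) auto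
  then obtain y where y: "y \<in> ?E" "key X y = ?m" by auto
  have ym: "\<forall>z\<in>?E. key X y \<le> key X z" using y fE by auto
  have ex: "\<exists>y. y \<in> ?E \<and> (\<forall>z\<in>?E. lay U F X y < lay U F X z \<or> (lay U F X y = lay U F X z \<and> y \<le> z))"
    apply (rule exI[of _ y])
    using y(1) ym unfolding key_def less_eq_prod_def by auto
  have "choose' U F X A \<in> ?E \<and> (\<forall>z\<in>?E. lay U F X (choose' U F X A) < lay U F X z \<or>
      (lay U F X (choose' U F X A) = lay U F X z \<and> choose' U F X A \<le> z))"
    unfolding choose'_def by (rule someI_ex[OF ex])
  then show ?thesis by (auto simp: key_def less_eq_prod_def)
qed

lemma key_eq: "key X y \<le> key X z \<Longrightarrow> key X z \<le> key X y \<Longrightarrow> y = z"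
  by (auto simp: key_def less_eq_prod_def)

lemma compl_sub: "X \<subseteq> compl_it U F A n X"
proof (induction n arbitrary: X)
  case 0 then show ?case by simp
next
  case (Suc n)
  show ?case using Suc.IH[of "insert (choose' U F X A) X"] by auto
qed

lemma compl_F: "A \<subseteq> U \<Longrightarrow> X \<in> F \<Longrightarrow> compl_it U F A n X \<in> F"
proof (induction n arbitrary: X)
  case 0 then show ?case by simp
next
  case (Suc n)
  show ?case
  proof (cases "ext F A X = {}")
    case True then show ?thesis using Suc by simp
  next
    case False
    then have "insert (choose' U F X A) X \<in> F" using choose_prop[OF Suc(2) False] by (auto simp: ext_iff)
    then show ?thesis using Suc False by simp
  qed
qed

lemma compl_stable: "A \<subseteq> U \<Longrightarrow> card (A - X) \<le> n \<Longrightarrow> compl_it U F A (Suc n) X = compl_it U F A n X"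
proof (induction n arbitrary: X)
  case 0
  have "finite (A - X)" using 0 finU finite_subset by blast
  then have "A - X = {}" using 0 by simp
  then have "ext F A X = {}" by (auto simp: ext_def)
  then show ?case by simp
next
  case (Suc n)
  show ?case
  proof (cases "ext F A X = {}")
    case True then show ?thesis by simp
  next
    case False
    let ?c = "choose' U F X A"
    have c: "?c \<in> A" "?c \<notin> X" using choose_prop[OF Suc(2) False] by (auto simp: ext_iff)
    have fA: "finite A" using Suc(2) finU finite_subset by blast
    have e: "A - insert ?c X = (A - X) - {?c}" by auto
    have "card ((A - X) - {?c}) < card (A - X)" using c fA by (intro card_Diff1_less) auto
    then have "card (A - insert ?c X) < card (A - X)" using e by simp
    then have "card (A - insert ?c X) \<le> n" using Suc(3) by simp
    then show ?thesis using Suc(1)[OF Suc(2)] False by simp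
  qed
qed

lemma complete_step:
  assumes "A \<subseteq> U" "ext F A X \<noteq> {}"
  shows "complete' U F X A = complete' U F (insert (choose' U F X A) X) A"
proof -
  let ?c = "choose' U F X A"
  have c: "?c \<in> A" "?c \<notin> X" using choose_prop[OF assms] by (auto simp: ext_iff)
  have fA: "finite A" using assms finU finite_subset by blast
  have "A - X \<subseteq> U" using assms by auto
  then have "card (A - X) \<le> card U" using finU card_mono by blast
  moreover have "card (A - X) \<noteq> 0" using c fA by auto
  ultimately obtain n where n: "card U = Suc n" by (cases "card U") auto
  have e: "A - insert ?c X = (A - X) - {?c}" by auto
  have "card ((A - X) - {?c}) < card (A - X)" using c fA by (intro card_Diff1_less) auto
  then have "card (A - insert ?c X) < card (A - X)" using e by simp
  then have le: "card (A - insert ?c X) \<le> n" using n \<open>card (A - X) \<le> card U\<close> by simp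
  have "complete' U F X A = compl_it U F A n (insert ?c X)"
    unfolding complete'_def n using assms by simp
  also have "\<dots> = compl_it U F A (Suc n) (insert ?c X)"
    using compl_stable[OF assms(1) le] by simp
  finally show ?thesis unfolding complete'_def n .
qed

lemma complete_fix: "ext F A X = {} \<Longrightarrow> complete' U F X A = X"
  unfolding complete'_def by (cases "card U") auto

end

locale csys = sys +
  fixes S :: "int set"
  assumes maxS: "maximal F S" and neS: "S \<noteq> {}"
begin

definition t where "t = source F S"
abbreviation pre where "pre i \<equiv> canon_prefix U F S i"
abbreviation nxt where "nxt i \<equiv> choose' U F (pre i) S"

lemma SF: "S \<in> F" using maxS by (simp add: maximal_def)
lemma SU: "S \<subseteq> U" using SF F_sub by blast
lemma finS: "finite S" using SF F_fin by blast

lemma S_noext: "ext F U S = {}"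
proof (rule ccontr)
  assume "ext F U S \<noteq> {}"
  then obtain a where "a \<in> ext F U S" by blast
  then have "insert a S \<in> F" "S \<subset> insert a S" by (auto simp: ext_iff)
  then show False using maxS by (auto simp: maximal_def)
qed

lemma t_props: "t \<in> S" "{t} \<in> F" "t \<in> Zset F" "\<And>x. x \<in> S \<Longrightarrow> x \<in> Zset F \<Longrightarrow> t \<le> x"
proof -
  have "{} \<subset> S" using neS by auto
  then obtain z where "z \<in> S" "insert z {} \<in> F" using sa_step[OF emp SF] by blast
  then have ne: "S \<inter> Zset F \<noteq> {}" by (auto simp: Zset_def)
  have fin: "finite (S \<inter> Zset F)" using finS by simp
  have "t \<in> S \<inter> Zset F" unfolding t_def source_def using Min_in[OF fin ne] .
  then show "t \<in> S" "{t} \<in> F" "t \<in> Zset F" by (auto simp: Zset_def)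
  show "\<And>x. x \<in> S \<Longrightarrow> x \<in> Zset F \<Longrightarrow> t \<le> x" unfolding t_def source_def using fin by simp
qed

lemma pre_Suc: "1 \<le> i \<Longrightarrow> pre (Suc i) = insert (nxt i) (pre i)"
  by (cases i) auto

lemma pre_one: "pre 1 = {t}" by (simp add: t_def)

lemma pre_props: "1 \<le> i \<Longrightarrow> i \<le> card S \<Longrightarrow> pre i \<in> F \<and> pre i \<subseteq> S \<and> t \<in> pre i \<and> card (pre i) = i"
proof (induction i)
  case 0 then show ?case by simp
next
  case (Suc i)
  show ?case
  proof (cases "i = 0")
    case True then show ?thesis using t_props pre_one by simp
  next
    case False
    then have IH: "pre i \<in> F" "pre i \<subseteq> S" "t \<in> pre i" "card (pre i) = i" using Suc by auto
    have "pre i \<subset> S" using IH Suc(3) by auto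
    then obtain z where "z \<in> S - pre i" "insert z (pre i) \<in> F" using sa_step[OF IH(1) SF] by blast
    then have ne: "ext F S (pre i) \<noteq> {}" by (auto simp: ext_iff)
    have c: "nxt i \<in> ext F S (pre i)" using choose_prop[OF SU ne] by blast
    have e: "pre (Suc i) = insert (nxt i) (pre i)" using pre_Suc False by simp
    have "finite (pre i)" using IH finS finite_subset by blast
    then show ?thesis using c IH e by (auto simp: ext_iff)
  qed
qed

lemma src_pre: "1 \<le> i \<Longrightarrow> i \<le> card S \<Longrightarrow> source F (pre i) = t"
proof -
  assume a: "1 \<le> i" "i \<le> card S"
  have p: "pre i \<subseteq> S" "t \<in> pre i" using pre_props[OF a] by auto
  have fin: "finite (pre i \<inter> Zset F)" using p finS finite_subset by blast
  show ?thesis unfolding source_def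
    apply (rule Min_eqI[OF fin])
    using p t_props by auto
qed

lemma key_pre: "1 \<le> i \<Longrightarrow> i \<le> card S \<Longrightarrow> key (pre i) y = (L (pre i) t y, y)"
  using src_pre by (simp add: key_def lay_def)

lemma nxt_prop: "1 \<le> i \<Longrightarrow> i < card S \<Longrightarrow>
   nxt i \<in> ext F S (pre i) \<and> (\<forall>z\<in>ext F S (pre i). key (pre i) (nxt i) \<le> key (pre i) z)"
proof -
  assume a: "1 \<le> i" "i < card S"
  have IH: "pre i \<in> F" "pre i \<subseteq> S" "card (pre i) = i" using pre_props[of i] a by auto
  have "pre i \<subset> S" using IH a by auto
  then obtain z where "z \<in> S - pre i" "insert z (pre i) \<in> F" using sa_step[OF IH(1) SF] by blast
  then have ne: "ext F S (pre i) \<noteq> {}" by (auto simp: ext_iff)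
  show ?thesis using choose_prop[OF SU ne] by blast
qed

lemma pre_mono: "1 \<le> i \<Longrightarrow> i \<le> m \<Longrightarrow> m \<le> card S \<Longrightarrow> pre i \<subseteq> pre m"
proof (induction m)
  case 0 then show ?case by simp
next
  case (Suc m)
  show ?case
  proof (cases "i = Suc m")
    case True then show ?thesis by simp
  next
    case False
    then have "pre i \<subseteq> pre m" using Suc by auto
    moreover have "1 \<le> m" using Suc False by auto
    ultimately show ?thesis using pre_Suc by auto
  qed
qed

lemma pre_full: "pre (card S) = S"
proof -
  have "1 \<le> card S" using neS finS by (simp add: Suc_leI card_gt_0_iff)
  then have p: "pre (card S) \<subseteq> S" "card (pre (card S)) = card S" using pre_props by auto
  then show ?thesis using finS by (simp add: card_subset_eq)
qed

lemma chain: "1 \<le> i \<Longrightarrow> i \<le> m \<Longrightarrow> m < card S \<Longrightarrow> key (pre i) (nxt i) \<le> key (pre m) (nxt m)"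
proof (induction m)
  case 0 then show ?case by simp
next
  case (Suc m)
  show ?case
  proof (cases "i = Suc m")
    case True then show ?thesis by simp
  next
    case False
    then have m: "1 \<le> m" "i \<le> m" "m < card S" using Suc by auto
    have IH: "key (pre i) (nxt i) \<le> key (pre m) (nxt m)" using Suc m by auto
    have pm: "pre m \<in> F" "pre m \<subseteq> S" "t \<in> pre m" using pre_props[of m] m by auto
    have na: "nxt m \<in> ext F S (pre m)" and amin: "\<forall>z\<in>ext F S (pre m). key (pre m) (nxt m) \<le> key (pre m) z"
      using nxt_prop m by auto
    have eS: "pre (Suc m) = insert (nxt m) (pre m)" using pre_Suc m by simp
    have nb: "nxt (Suc m) \<in> ext F S (pre (Suc m))" using nxt_prop[of "Suc m"] Suc(4) by auto
    have "(L (pre m) t (nxt m), nxt m) \<le> (L (insert (nxt m) (pre m)) t (nxt (Suc m)), nxt (Suc m))"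
    proof (rule sorted_step[OF pm(1) pm(3) t_props(2)])
      show "nxt m \<in> ext F U (pre m)" using na SU by (auto simp: ext_iff)
      show "nxt (Suc m) \<in> ext F U (insert (nxt m) (pre m))" using nb SU eS by (auto simp: ext_iff)
      assume "nxt (Suc m) \<in> ext F U (pre m)"
      then have "nxt (Suc m) \<in> ext F S (pre m)" using nb by (auto simp: ext_iff)
      then show "(L (pre m) t (nxt m), nxt m) \<le> (L (pre m) t (nxt (Suc m)), nxt (Suc m))"
        using amin key_pre[of m] m by auto
    qed
    then have "key (pre m) (nxt m) \<le> key (pre (Suc m)) (nxt (Suc m))"
      using key_pre[of m] key_pre[of "Suc m"] m Suc(4) eS by auto
    then show ?thesis using IH by simp
  qed
qed


lemma stay:
  assumes i: "1 \<le> i" "i < j" and j: "j \<le> card S" and cj: "complete' U F (pre j) U = S"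
    and y: "y \<notin> S" "y \<in> ext F U (pre i)" "y \<in> ext F U (pre j)"
  shows "key (pre i) (nxt i) \<le> key (pre i) y"
proof (rule ccontr)
  assume "\<not> key (pre i) (nxt i) \<le> key (pre i) y"
  then have lt: "key (pre i) y < key (pre i) (nxt i)" by simp
  have pi: "pre i \<in> F" "pre i \<subseteq> S" "t \<in> pre i" using pre_props[of i] i j by auto
  have pj: "pre j \<in> F" "pre j \<subseteq> S" using pre_props[of j] i j by auto
  have sub: "pre i \<subseteq> pre j" using pre_mono i j by simp
  have "L (pre j) t y \<le> L (pre i) t y" using lay_mono[OF pi(1) pj(1) sub pi(3) t_props(2) y(2,3)] .
  then have kj: "key (pre j) y \<le> key (pre i) y"
    using key_pre[of i] key_pre[of j] i j by (auto simp: less_eq_prod_def)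
  show False
  proof (cases "j = card S")
    case True
    then show False using y(3) S_noext pre_full by simp
  next
    case False
    then have jl: "j < card S" using j by simp
    have ch: "key (pre i) (nxt i) \<le> key (pre j) (nxt j)" using chain i jl by simp
    have ne: "ext F U (pre j) \<noteq> {}" using y by auto
    let ?c = "choose' U F (pre j) U"
    have c: "?c \<in> ext F U (pre j)" "key (pre j) ?c \<le> key (pre j) y" using choose_prop[OF _ ne] y by auto
    have "?c \<in> complete' U F (insert ?c (pre j)) U" using compl_sub unfolding complete'_def by blast
    then have "?c \<in> S" using complete_step[OF _ ne] cj by simp
    then have "?c \<in> ext F S (pre j)" using c by (auto simp: ext_iff)
    then have "key (pre j) (nxt j) \<le> key (pre j) ?c" using nxt_prop[of j] i jl by auto
    then show False using c kj lt ch by simp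
  qed
qed

lemma main_loc:
  assumes P: "parent' U F S = P" and w: "pi' U F S = w" and wU: "w \<in> U"
    and nr: "\<not> is_root U F S"
  shows "w \<notin> P \<and>
    (\<exists>R\<in>restr F P w. \<exists>s\<in>R \<inter> Zset F. s \<noteq> w \<and>
       S = complete' U F (complete_trunc U F {s} R w \<union> {w}) U)"
proof -
  define j where "j = canon_j U F S"
  let ?Q = "\<lambda>j. 1 \<le> j \<and> j \<le> card S \<and> complete' U F (pre j) U = S"
  have cS: "1 \<le> card S" using neS finS by (simp add: Suc_leI card_gt_0_iff)
  have "?Q (card S)" using cS pre_full complete_fix[OF S_noext] by simp
  then have Qj: "?Q j" unfolding j_def canon_j_def by (rule LeastI)
  have j1: "j \<noteq> 1" using nr j_def by (simp add: is_root_def)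
  define k where "k = j - 1"
  have k: "1 \<le> k" "Suc k = j" "k < card S" using Qj j1 unfolding k_def by auto
  have "k < (LEAST j. ?Q j)" using k j_def canon_j_def by simp
  then have nQk: "\<not> ?Q k" by (rule not_less_Least)
  then have Pne: "complete' U F (pre k) U \<noteq> S" using k by auto
  have wdef: "w = nxt k" using w j1 k unfolding pi'_def j_def[symmetric] canon_elem_def by auto
  have Pdef: "P = complete' U F (pre k) U" using P unfolding parent'_def core'_def j_def[symmetric] k_def by simp
  have prej: "pre j = insert w (pre k)" using pre_Suc k wdef by auto
  have cj: "complete' U F (pre j) U = S" using Qj by simp
  have pk: "pre k \<in> F" "pre k \<subseteq> S" "t \<in> pre k" using pre_props[of k] k by auto
  have pjF: "pre j \<in> F" "pre j \<subseteq> S" using pre_props[of j] Qj by auto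
  have wn: "w \<in> ext F S (pre k)" and wmin: "\<forall>z\<in>ext F S (pre k). key (pre k) w \<le> key (pre k) z"
    using nxt_prop[of k] k wdef by auto
  have wU': "w \<in> ext F U (pre k)" using wn SU by (auto simp: ext_iff)
  have wk: "w \<notin> pre k" using wn by (auto simp: ext_iff)
  have neU: "ext F U (pre k) \<noteq> {}" using wU' by auto
  let ?c = "choose' U F (pre k) U"
  have c: "?c \<in> ext F U (pre k)" "key (pre k) ?c \<le> key (pre k) w" using choose_prop[OF _ neU] wU' by auto
  have PF: "P \<in> F" using Pdef compl_F pk unfolding complete'_def by blast
  have Pc: "P = complete' U F (insert ?c (pre k)) U" using Pdef complete_step[OF _ neU] by simp
  have cP: "?c \<in> P" using Pc compl_sub unfolding complete'_def by blast
  have kP: "pre k \<subseteq> P" using Pdef compl_sub unfolding complete'_def by blast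
  have cw: "?c \<noteq> w" using Pc Pne Pdef prej cj by auto
  have wP: "w \<notin> P"
  proof
    assume wP: "w \<in> P"
    have "insert w (insert ?c (pre k)) \<in> F"
      apply (rule cm_step[OF pk(1) PF])
      using pk c wP cP kP wk wn by (auto simp: ext_iff)
    then have ins: "insert ?c (pre j) \<in> F" using prej by (simp add: insert_commute)
    have cS: "?c \<notin> S"
    proof
      assume "?c \<in> S"
      then have "?c \<in> ext F S (pre k)" using c by (auto simp: ext_iff)
      then have "key (pre k) w \<le> key (pre k) ?c" using wmin by auto
      then show False using key_eq c cw by blast
    qed
    have cj': "?c \<in> ext F U (pre j)" using ins cS pjF c by (auto simp: ext_iff)
    have "key (pre k) (nxt k) \<le> key (pre k) ?c" using stay[OF k(1) _ _ cj cS c(1) cj'] k Qj by auto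
    then show False using key_eq c cw wdef by blast
  qed
  define Fam where "Fam = {Y \<in> F. pre j \<subseteq> Y \<and> Y \<subseteq> insert w P}"
  have "Fam \<subseteq> Pow U" using FU Fam_def by auto
  then have fFam: "finite Fam" using finU by (meson finite_Pow_iff finite_subset)
  have "pre j \<in> Fam" using pjF kP prej Fam_def by auto
  then obtain R where R: "R \<in> Fam" "\<forall>b\<in>Fam. R \<le> b \<longrightarrow> R = b" using finite_has_maximal[OF fFam] by blast
  have RF: "R \<in> F" "pre j \<subseteq> R" "R \<subseteq> insert w P" using R Fam_def by auto
  have PU: "P \<subseteq> U" using PF F_sub by blast
  have RU: "R \<subseteq> U" using RF PU wU by auto
  have wR: "w \<in> R" using RF prej by auto
  have Rmax: "\<not> (\<exists>Y\<in>F. Y \<subseteq> insert w P \<and> R \<subset> Y)"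
  proof
    assume "\<exists>Y\<in>F. Y \<subseteq> insert w P \<and> R \<subset> Y"
    then obtain Y where Y: "Y \<in> F" "Y \<subseteq> insert w P" "R \<subset> Y" by blast
    then have "Y \<in> Fam" using RF Fam_def by auto
    then have "R = Y" using R(2) Y by auto
    then show False using Y by simp
  qed
  have Rr: "R \<in> restr F P w"
    unfolding restr_def using RF wR wP Rmax by auto
  have chR: "choose' U F (pre i) R = nxt i" if i: "1 \<le> i" "i \<le> k" for i
  proof -
    have pi: "pre i \<in> F" "pre i \<subseteq> S" "t \<in> pre i" using pre_props[of i] i k by auto
    have ni: "nxt i \<in> ext F S (pre i)" and nmin: "\<forall>z\<in>ext F S (pre i). key (pre i) (nxt i) \<le> key (pre i) z"
      using nxt_prop[of i] i k by auto
    have "pre (Suc i) \<subseteq> pre j" using pre_mono[of "Suc i" j] i k by simp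
    then have "nxt i \<in> R" using pre_Suc i RF by auto
    then have niR: "nxt i \<in> ext F R (pre i)" using ni by (auto simp: ext_iff)
    then have neR: "ext F R (pre i) \<noteq> {}" by auto
    let ?d = "choose' U F (pre i) R"
    have d: "?d \<in> ext F R (pre i)" "key (pre i) ?d \<le> key (pre i) (nxt i)"
      using choose_prop[OF RU neR] niR by auto
    have "key (pre i) (nxt i) \<le> key (pre i) ?d"
    proof (cases "?d \<in> S")
      case True
      then have "?d \<in> ext F S (pre i)" using d by (auto simp: ext_iff)
      then show ?thesis using nmin by auto
    next
      case False
      have sij: "pre i \<subseteq> pre j" using pre_mono[of i j] i k by simp
      have "insert ?d (pre j) \<in> F"
        apply (rule grow[of "pre i" _ _ R])
        using sij pi pjF d False RF by (auto simp: ext_iff)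
      then have dj: "?d \<in> ext F U (pre j)" using False pjF d RU by (auto simp: ext_iff)
      have di: "?d \<in> ext F U (pre i)" using d RU by (auto simp: ext_iff)
      show ?thesis using stay[OF i(1) _ _ cj False di dj] i k Qj by auto
    qed
    then show ?thesis using key_eq d by blast
  qed
  have tr: "\<And>i n. i + d = k \<Longrightarrow> 1 \<le> i \<Longrightarrow> d \<le> n \<Longrightarrow> compl_tr_it U F R w n (pre i) = pre k" for d
  proof (induction d)
    case 0
    then have ik: "i = k" by simp
    show ?case
    proof (cases n)
      case 0 then show ?thesis using ik by simp
    next
      case (Suc n')
      have "w \<in> ext F R (pre k)" using wn wR by (auto simp: ext_iff)
      then have "ext F R (pre k) \<noteq> {}" by auto
      moreover have "choose' U F (pre k) R = w" using chR[of k] k wdef by simp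
      ultimately show ?thesis using ik Suc by simp
    qed
  next
    case (Suc d)
    then obtain n' where n: "n = Suc n'" by (cases n) auto
    have i: "1 \<le> i" "i \<le> k" "i < k" using Suc by auto
    have ni: "nxt i \<in> ext F S (pre i)" using nxt_prop[of i] i k by auto
    have "pre (Suc i) \<subseteq> pre j" using pre_mono[of "Suc i" j] i k by simp
    then have "nxt i \<in> R" using pre_Suc i RF by auto
    then have "nxt i \<in> ext F R (pre i)" using ni by (auto simp: ext_iff)
    then have ne: "ext F R (pre i) \<noteq> {}" by auto
    have "pre (Suc i) \<subseteq> pre k" using pre_mono[of "Suc i" k] i k by simp
    then have nw: "nxt i \<noteq> w" using pre_Suc i wk by auto
    have "compl_tr_it U F R w n (pre i) = compl_tr_it U F R w n' (pre (Suc i))"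
      using n ne chR[OF i(1,2)] nw pre_Suc i by simp
    also have "\<dots> = pre k" using Suc i n by auto
    finally show ?case .
  qed
  have "card S \<le> card U" using SU finU card_mono by blast
  then have "compl_tr_it U F R w (card U) (pre 1) = pre k" using tr[of 1 "k - 1" "card U"] k by auto
  then have trR: "complete_trunc U F {t} R w = pre k" using pre_one by (simp add: complete_trunc_def)
  have "t \<in> R \<inter> Zset F" using pk RF prej t_props by auto
  moreover have "t \<noteq> w" using pk wk by auto
  moreover have "S = complete' U F (complete_trunc U F {t} R w \<union> {w}) U"
    using trR prej cj by simp
  ultimately show ?thesis using wP Rr by blast
qed

end


theorem mainTheorem8:
  fixes U :: "int set" and F :: "int set set" and P S :: "int set" and w :: int
  assumes "set_system U F"
    and "strongly_accessible F"
    and "commutable F"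
    and "maximal F P"
    and "w \<in> U"
    and "maximal F S"
    and "S \<noteq> {}"
    and "\<not> is_root U F S"
    and "parent' U F S = P"
    and "pi' U F S = w"
  shows "w \<notin> P \<and>
    (\<exists>R\<in>restr F P w. \<exists>s\<in>R \<inter> Zset F. s \<noteq> w \<and>
       S = complete' U F (complete_trunc U F {s} R w \<union> {w}) U)"
proof -
  interpret csys U F S
    using assms by (unfold_locales) (auto simp: set_system_def)
  show ?thesis using main_loc assms by blast
qed

end
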